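(* Let $k$ be a countable infinite field. The two-sorted ultrametric space $(k(t^{\mathbb Q}),d,D)$ underlying the valued field $k(t^{\mathbb Q})$ is, after identifying $D$ with $\mathbb Q_{\ge0}$ via an order isomorphism, isometric to the countable rational Urysohn ultrametric space $\mathbb U$.
   Context: The Hahn field $k[[t^{\mathbb Q}]]$ consists of formal series $a=\sum_{q\in\mathbb Q}a_qt^q$, $a_q\in k$, with well-ordered support $\mathrm{supp}(a)=\{q:a_q\ne0\}$, with the usual addition and multiplication; $k[t^{\mathbb Q}]$ is its subring of elements with finite support, and $k(t^{\mathbb Q})$ is the field of fractions of $k[t^{\mathbb Q}]$ (inside $k[[t^{\mathbb Q}]]$). The valuation is $v(a)=\min\mathrm{supp}(a)$ ($v(0)=\infty$). The distance set $D=\{e^{-q}:q\in\mathbb Q\}\cup\{0\}$ is ordered as a subset of $\mathbb R$ (order-isomorphic to $\mathbb Q_{\ge0}$), and $d(a,b)=e^{-v(a-b)}$ with $e^{-\infty}=0$. $\mathbb U$ is the unique countable ultrametric space with distances in $\mathbb Q_{\ge0}$ universal for finite rational ultrametric spaces in which every isometry between finite subsets extends to a global isometry. *)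

theory Defs
  imports Complex_Main "HOL-Library.Countable_Set"
begin

definition hsupp :: "(rat \<Rightarrow> 'k::zero) \<Rightarrow> rat set" where
  "hsupp a = {q. a q \<noteq> 0}"

definition hahn :: "(rat \<Rightarrow> 'k::field) set" where
  "hahn = {a. \<forall>S. S \<subseteq> hsupp a \<longrightarrow> S \<noteq> {} \<longrightarrow> (\<exists>m\<in>S. \<forall>x\<in>S. m \<le> x)}"

definition hadd :: "(rat \<Rightarrow> 'k::field) \<Rightarrow> (rat \<Rightarrow> 'k) \<Rightarrow> rat \<Rightarrow> 'k" where
  "hadd a b = (\<lambda>q. a q + b q)"

definition hsub :: "(rat \<Rightarrow> 'k::field) \<Rightarrow> (rat \<Rightarrow> 'k) \<Rightarrow> rat \<Rightarrow> 'k" where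
  "hsub a b = (\<lambda>q. a q - b q)"

text \<open>Cauchy product (the index sets are finite for Hahn series).\<close>
definition hmul :: "(rat \<Rightarrow> 'k::field) \<Rightarrow> (rat \<Rightarrow> 'k) \<Rightarrow> rat \<Rightarrow> 'k" where
  "hmul a b = (\<lambda>q. sum (\<lambda>(r, s). a r * b s)
      {(r, s). r \<in> hsupp a \<and> s \<in> hsupp b \<and> r + s = q})"

text \<open>k[t^Q]: finite support. k(t^Q): fraction field of k[t^Q] inside k[[t^Q]],
  i.e. the Hahn series a with a * q = p for some p, q in k[t^Q], q \<noteq> 0.\<close>
definition hpoly :: "(rat \<Rightarrow> 'k::field) set" where
  "hpoly = {a. finite (hsupp a)}"

definition hrat :: "(rat \<Rightarrow> 'k::field) set" where
  "hrat = {a \<in> hahn. \<exists>p q. p \<in> hpoly \<and> q \<in> hpoly \<and> q \<noteq> (\<lambda>_. 0) \<and> hmul a q = p}"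

definition hval :: "(rat \<Rightarrow> 'k::field) \<Rightarrow> rat" where
  "hval a = (LEAST q. q \<in> hsupp a)"

definition hdist :: "(rat \<Rightarrow> 'k::field) \<Rightarrow> (rat \<Rightarrow> 'k) \<Rightarrow> real" where
  "hdist a b = (if a = b then 0 else exp (- real_of_rat (hval (hsub a b))))"

definition distset :: "real set" where
  "distset = {exp (- real_of_rat q) | q. True} \<union> {0}"

definition rat_ultrametric :: "'a set \<Rightarrow> ('a \<Rightarrow> 'a \<Rightarrow> rat) \<Rightarrow> bool" where
  "rat_ultrametric X \<delta> \<longleftrightarrow>
     (\<forall>x\<in>X. \<forall>y\<in>X. 0 \<le> \<delta> x y \<and> (\<delta> x y = 0 \<longleftrightarrow> x = y) \<and> \<delta> x y = \<delta> y x) \<and>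
     (\<forall>x\<in>X. \<forall>y\<in>X. \<forall>z\<in>X. \<delta> x z \<le> max (\<delta> x y) (\<delta> y z))"

definition isom_embedding :: "'a set \<Rightarrow> ('a \<Rightarrow> 'a \<Rightarrow> rat) \<Rightarrow> 'b set \<Rightarrow> ('b \<Rightarrow> 'b \<Rightarrow> rat)
    \<Rightarrow> ('a \<Rightarrow> 'b) \<Rightarrow> bool" where
  "isom_embedding A \<rho> B \<delta> f \<longleftrightarrow> f ` A \<subseteq> B \<and> (\<forall>x\<in>A. \<forall>y\<in>A. \<delta> (f x) (f y) = \<rho> x y)"

text \<open>Countable, universal for finite rational ultrametric spaces (finite spaces are
  represented on finite subsets of nat, which loses no generality), and ultrahomogeneous.\<close>
definition rat_urysohn :: "'a set \<Rightarrow> ('a \<Rightarrow> 'a \<Rightarrow> rat) \<Rightarrow> bool" where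
  "rat_urysohn X \<delta> \<longleftrightarrow>
     countable X \<and> rat_ultrametric X \<delta> \<and>
     (\<forall>(F::nat set) \<rho>. finite F \<longrightarrow> rat_ultrametric F \<rho> \<longrightarrow>
        (\<exists>f. isom_embedding F \<rho> X \<delta> f)) \<and>
     (\<forall>A f. finite A \<longrightarrow> A \<subseteq> X \<longrightarrow> isom_embedding A \<delta> X \<delta> f \<longrightarrow>
        (\<exists>g. bij_betw g X X \<and> isom_embedding X \<delta> X \<delta> g \<and> (\<forall>x\<in>A. g x = f x)))"

end

theory Submission
  imports Defs
begin


definition EPs :: "'a set \<Rightarrow> ('a \<Rightarrow> 'a \<Rightarrow> rat) \<Rightarrow> bool" where
 "EPs X d \<longleftrightarrow> (\<forall>A r. finite A \<longrightarrow> A \<subseteq> X \<longrightarrow> (\<forall>a\<in>A. 0 < r a) \<longrightarrow>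
    (\<forall>a\<in>A. \<forall>b\<in>A. d a b \<le> max (r a) (r b) \<and> r a \<le> max (d a b) (r b)) \<longrightarrow>
    (\<exists>z\<in>X. \<forall>a\<in>A. d z a = r a))"

lemma EPsD:
  assumes "EPs X d" "finite A" "A \<subseteq> X" "\<forall>a\<in>A. 0 < r a"
    "\<forall>a\<in>A. \<forall>b\<in>A. d a b \<le> max (r a) (r b) \<and> r a \<le> max (d a b) (r b)"
  shows "\<exists>z\<in>X. \<forall>a\<in>A. d z a = r a"
  using assms unfolding EPs_def by blast

lemma EPi:
  assumes ep: "EPs X d" and um: "rat_ultrametric X d" and fin: "finite I" and gI: "g ` I \<subseteq> X"
    and pos: "\<forall>i\<in>I. 0 < r i"
    and cons: "\<forall>i\<in>I. \<forall>j\<in>I. d (g i) (g j) \<le> max (r i) (r j) \<and> r i \<le> max (d (g i) (g j)) (r j)"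
  shows "\<exists>z\<in>X. \<forall>i\<in>I. d z (g i) = r i"
proof -
  define r' where "r' b = r (SOME i. i \<in> I \<and> g i = b)" for b
  have r'g: "r' (g i) = r i" if "i \<in> I" for i
  proof -
    have ex: "\<exists>j. j \<in> I \<and> g j = g i" using that by blast
    define j where "j = (SOME j. j \<in> I \<and> g j = g i)"
    have j: "j \<in> I \<and> g j = g i" unfolding j_def by (rule someI_ex[OF ex])
    have "d (g i) (g j) = 0" using j um gI that unfolding rat_ultrametric_def by auto
    then have "r i \<le> r j" "r j \<le> r i" using cons j that pos
      by (metis max.absorb2 less_imp_le)+
    then show ?thesis unfolding r'_def j_def[symmetric] by simp
  qed
  have "\<exists>z\<in>X. \<forall>a\<in>g ` I. d z a = r' a"
    apply (rule EPsD[OF ep])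
    using fin gI pos cons r'g by auto
  then show ?thesis using r'g by auto
qed


lemma C_imp_EPs:
  assumes um: "rat_ultrametric X d" and ne: "X \<noteq> {}"
    and C: "\<And>A a0 m. finite A \<Longrightarrow> A \<subseteq> X \<Longrightarrow> a0 \<in> X \<Longrightarrow> 0 < m \<Longrightarrow>
       \<exists>z\<in>X. d z a0 = m \<and> (\<forall>a\<in>A. d a a0 \<le> m \<longrightarrow> d z a = m)"
  shows "EPs X d"
  unfolding EPs_def
proof (intro allI impI)
  fix A r
  assume fin: "finite A" and AX: "A \<subseteq> X" and pos: "\<forall>a\<in>A. 0 < r a"
    and cons: "\<forall>a\<in>A. \<forall>b\<in>A. d a b \<le> max (r a) (r b) \<and> r a \<le> max (d a b) (r b)"
  show "\<exists>z\<in>X. \<forall>a\<in>A. d z a = r a"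
  proof (cases "A = {}")
    case True then show ?thesis using ne by auto
  next
    case False
    have "Min (r ` A) \<in> r ` A" using fin False by simp
    then obtain a0 where a0: "a0 \<in> A" "r a0 = Min (r ` A)" by auto
    then have a0: "a0 \<in> A" "\<forall>a\<in>A. r a0 \<le> r a" using fin by auto
    obtain z where z: "z \<in> X" "d z a0 = r a0" "\<forall>a\<in>A. d a a0 \<le> r a0 \<longrightarrow> d z a = r a0"
      using C[OF fin AX _ ] a0 AX pos by blast
    have "d z a = r a" if a: "a \<in> A" for a
    proof (cases "d a a0 \<le> r a0")
      case True
      have "r a \<le> max (d a a0) (r a0)" using cons a a0 by blast
      then have "r a = r a0" using True a0 a by (meson max.boundedI order_antisym order_trans)
      then show ?thesis using z True a by simp
    next
      case False
      have aX: "a \<in> X" "a0 \<in> X" using a a0 AX by auto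
      have 1: "r a \<le> max (d a a0) (r a0)" "d a a0 \<le> max (r a) (r a0)" using cons a a0 by blast+
      have ra: "r a = d a a0" using 1 False a0 a by (simp add: max_def split: if_splits)
      have t1: "d a a0 \<le> max (d a z) (d z a0)" "d z a \<le> max (d z a0) (d a0 a)"
        using um aX z(1) unfolding rat_ultrametric_def by blast+
      have sy: "d a z = d z a" "d a0 a = d a a0" using um aX z(1) unfolding rat_ultrametric_def by blast+
      show ?thesis using t1 sy z(2) False ra by (simp add: max_def split: if_splits)
    qed
    then show ?thesis using z(1) by blast
  qed
qed

lemma um_subset: "rat_ultrametric X d \<Longrightarrow> Y \<subseteq> X \<Longrightarrow> rat_ultrametric Y d"
  unfolding rat_ultrametric_def by blast

lemma EPs_universal:
  assumes ep: "EPs X d" and um: "rat_ultrametric X d"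
  shows "finite F \<Longrightarrow> rat_ultrametric F \<rho> \<Longrightarrow> \<exists>f. isom_embedding F \<rho> X d f"
proof (induction F rule: finite_induct)
  case empty
  then show ?case unfolding isom_embedding_def by auto
next
  case (insert x F)
  then obtain f where f: "isom_embedding F \<rho> X d f" using um_subset by blast
  have umF: "rat_ultrametric (insert x F) \<rho>" by fact
  have "\<exists>z\<in>X. \<forall>i\<in>F. d z (f i) = \<rho> x i"
    apply (rule EPi[OF ep um insert(1)])
    using f apply (simp add: isom_embedding_def)
    using umF insert(2) unfolding rat_ultrametric_def apply (metis insertCI order_le_less)
    using umF insert(2) f unfolding rat_ultrametric_def isom_embedding_def
    by (metis insertCI)
  then obtain z where z: "z \<in> X" "\<forall>i\<in>F. d z (f i) = \<rho> x i" by blast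
  have "isom_embedding (insert x F) \<rho> X d (f(x := z))"
    unfolding isom_embedding_def
  proof (intro conjI ballI)
    show "(f(x := z)) ` insert x F \<subseteq> X" using f z insert(2) unfolding isom_embedding_def by auto
  next
    fix a b assume ab: "a \<in> insert x F" "b \<in> insert x F"
    have fX: "f ` F \<subseteq> X" using f unfolding isom_embedding_def by auto
    have zz: "d z z = 0" using um z(1) unfolding rat_ultrametric_def by blast
    have xx: "\<rho> x x = 0" using umF unfolding rat_ultrametric_def by blast
    have sy: "\<forall>i\<in>F. d (f i) z = d z (f i)" using um z(1) fX unfolding rat_ultrametric_def by blast
    have syr: "\<forall>i\<in>F. \<rho> i x = \<rho> x i" using umF unfolding rat_ultrametric_def by blast
    have ff: "\<forall>i\<in>F. \<forall>j\<in>F. d (f i) (f j) = \<rho> i j" using f unfolding isom_embedding_def by blast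
    show "d ((f(x := z)) a) ((f(x := z)) b) = \<rho> a b"
      using ab z zz xx sy syr ff insert(2) by (cases "a = x"; cases "b = x") auto
  qed
  then show ?case by blast
qed


lemma urysohn_EPs:
  fixes U :: "nat set"
  assumes ur: "rat_urysohn U d"
  shows "EPs U d"
  unfolding EPs_def
proof (intro allI impI)
  fix A r
  assume fin: "finite A" and AU: "A \<subseteq> U" and pos: "\<forall>a\<in>A. 0 < r a"
    and cons: "\<forall>a\<in>A. \<forall>b\<in>A. d a b \<le> max (r a) (r b) \<and> r a \<le> max (d a b) (r b)"
  have um: "rat_ultrametric U d" using ur unfolding rat_urysohn_def by (elim conjE)
  have univ0: "\<forall>(F::nat set) \<rho>. finite F \<longrightarrow> rat_ultrametric F \<rho> \<longrightarrow> (\<exists>f. isom_embedding F \<rho> U d f)"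
    using ur unfolding rat_urysohn_def by (elim conjE)
  have hom0: "\<forall>A f. finite A \<longrightarrow> A \<subseteq> U \<longrightarrow> isom_embedding A d U d f \<longrightarrow>
        (\<exists>g. bij_betw g U U \<and> isom_embedding U d U d g \<and> (\<forall>x\<in>A. g x = f x))"
    using ur unfolding rat_urysohn_def by (elim conjE)
  have univ: "\<And>F \<rho>. finite (F::nat set) \<Longrightarrow> rat_ultrametric F \<rho> \<Longrightarrow> \<exists>f. isom_embedding F \<rho> U d f"
    using univ0 by blast
  have hom: "\<And>A f. finite A \<Longrightarrow> A \<subseteq> U \<Longrightarrow> isom_embedding A d U d f \<Longrightarrow>
        (\<exists>g. bij_betw g U U \<and> isom_embedding U d U d g \<and> (\<forall>x\<in>A. g x = f x))"
    using hom0 by blast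
  obtain p :: nat where p: "p \<notin> A" using fin ex_new_if_finite infinite_UNIV_nat by blast
  define \<rho> where "\<rho> a b = (if a = b then 0 else if a = p then r b else if b = p then r a else d a b)" for a b
  have umA: "\<forall>x\<in>A. \<forall>y\<in>A. 0 \<le> d x y \<and> (d x y = 0 \<longleftrightarrow> x = y) \<and> d x y = d y x"
    "\<forall>x\<in>A. \<forall>y\<in>A. \<forall>z\<in>A. d x z \<le> max (d x y) (d y z)"
    using um AU unfolding rat_ultrametric_def by blast+
  have rnn: "0 \<le> \<rho> x y \<and> (\<rho> x y = 0) = (x = y) \<and> \<rho> x y = \<rho> y x"
    if xy: "x \<in> insert p A" "y \<in> insert p A" for x y
  proof -
    consider "x = y" | "x \<noteq> y" "x = p" "y \<in> A" | "x \<noteq> y" "y = p" "x \<in> A" | "x \<noteq> y" "x \<in> A" "y \<in> A" "x \<noteq> p" "y \<noteq> p"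
      using xy p by blast
    then show ?thesis
    proof cases
      case 1 then show ?thesis unfolding \<rho>_def by simp
    next
      case 2 then have "0 < r y" using pos by blast
      then show ?thesis using 2 unfolding \<rho>_def by simp
    next
      case 3 then have "0 < r x" using pos by blast
      then show ?thesis using 3 unfolding \<rho>_def by simp
    next
      case 4 then have "0 \<le> d x y \<and> (d x y = 0 \<longleftrightarrow> x = y) \<and> d x y = d y x" using umA by blast
      then show ?thesis using 4 unfolding \<rho>_def by simp
    qed
  qed
  have "rat_ultrametric (insert p A) \<rho>"
    unfolding rat_ultrametric_def
  proof (rule conjI; intro ballI)
    fix x y assume "x \<in> insert p A" "y \<in> insert p A"
    then show "0 \<le> \<rho> x y \<and> (\<rho> x y = 0) = (x = y) \<and> \<rho> x y = \<rho> y x"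
      using rnn by blast
  next
    fix x y z assume xyz: "x \<in> insert p A" "y \<in> insert p A" "z \<in> insert p A"
    show "\<rho> x z \<le> max (\<rho> x y) (\<rho> y z)"
    proof (cases "x = z")
      case True
      then have "\<rho> x z = 0" unfolding \<rho>_def by simp
      moreover have "0 \<le> \<rho> x y" using rnn xyz by blast
      ultimately show ?thesis by simp
    next
      case xz: False
      show ?thesis
      proof (cases "x = y \<or> y = z")
        case True then show ?thesis unfolding \<rho>_def using xz by auto
      next
        case False
        then have d: "x \<noteq> y" "y \<noteq> z" by auto
        consider "x = p" | "y = p" | "z = p" | "x \<noteq> p \<and> y \<noteq> p \<and> z \<noteq> p" by blast
        then show ?thesis
        proof cases
          case 1
          then have "y \<in> A" "z \<in> A" using xyz d xz by auto
          moreover have "r z \<le> max (d z y) (r y)" "d z y = d y z" using cons umA \<open>y \<in> A\<close> \<open>z \<in> A\<close> by blast+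
          moreover have "\<rho> x z = r z" "\<rho> x y = r y" "\<rho> y z = d y z" using 1 d xz \<open>y \<in> A\<close> \<open>z \<in> A\<close> p unfolding \<rho>_def by auto
          ultimately show ?thesis by (simp add: max.commute)
        next
          case 2
          then have "x \<in> A" "z \<in> A" using xyz d xz by auto
          moreover have "d x z \<le> max (r x) (r z)" using cons \<open>x \<in> A\<close> \<open>z \<in> A\<close> by blast
          moreover have "\<rho> x z = d x z" "\<rho> x y = r x" "\<rho> y z = r z" using 2 d xz \<open>x \<in> A\<close> \<open>z \<in> A\<close> p unfolding \<rho>_def by auto
          ultimately show ?thesis by simp
        next
          case 3
          then have "y \<in> A" "x \<in> A" using xyz d xz by auto
          moreover have "r x \<le> max (d x y) (r y)" using cons \<open>y \<in> A\<close> \<open>x \<in> A\<close> by blast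
          moreover have "\<rho> x z = r x" "\<rho> x y = d x y" "\<rho> y z = r y" using 3 d xz \<open>x \<in> A\<close> \<open>y \<in> A\<close> p unfolding \<rho>_def by auto
          ultimately show ?thesis by simp
        next
          case 4
          then have "y \<in> A" "x \<in> A" "z \<in> A" using xyz by auto
          then have "d x z \<le> max (d x y) (d y z)" using umA by blast
          moreover have "\<rho> x z = d x z" "\<rho> x y = d x y" "\<rho> y z = d y z" using 4 d xz unfolding \<rho>_def by auto
          ultimately show ?thesis by simp
        qed
      qed
    qed
  qed
  then obtain f where f: "isom_embedding (insert p A) \<rho> U d f" using univ fin by blast
  have fA: "isom_embedding A d U d f"
    unfolding isom_embedding_def
  proof (intro conjI ballI)
    show "f ` A \<subseteq> U" using f unfolding isom_embedding_def by auto
  next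
    fix x y assume xy: "x \<in> A" "y \<in> A"
    have "d (f x) (f y) = \<rho> x y" using f xy unfolding isom_embedding_def by auto
    moreover have "\<rho> x y = d x y" using xy p umA unfolding \<rho>_def by auto
    ultimately show "d (f x) (f y) = d x y" by simp
  qed
  then obtain g where g: "bij_betw g U U" "isom_embedding U d U d g" "\<forall>x\<in>A. g x = f x"
    using hom[OF fin AU fA] by blast
  have "f p \<in> U" using f unfolding isom_embedding_def by auto
  moreover have "g ` U = U" using g(1) unfolding bij_betw_def by blast
  ultimately obtain z where z: "z \<in> U" "g z = f p" by (metis imageE)
  have "d z a = r a" if a: "a \<in> A" for a
  proof -
    have "d z a = d (g z) (g a)" using g(2) z(1) a AU unfolding isom_embedding_def by auto
    also have "\<dots> = d (f p) (f a)" using z g(3) a by simp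
    also have "\<dots> = \<rho> p a" using f a unfolding isom_embedding_def by auto
    also have "\<dots> = r a" using p a unfolding \<rho>_def by auto
    finally show ?thesis .
  qed
  then show "\<exists>z\<in>U. \<forall>a\<in>A. d z a = r a" using z by blast
qed


lemma um_sym: "rat_ultrametric X d \<Longrightarrow> x \<in> X \<Longrightarrow> y \<in> X \<Longrightarrow> d x y = d y x"
  unfolding rat_ultrametric_def by blast
lemma um_tri: "rat_ultrametric X d \<Longrightarrow> x \<in> X \<Longrightarrow> y \<in> X \<Longrightarrow> z \<in> X \<Longrightarrow> d x z \<le> max (d x y) (d y z)"
  unfolding rat_ultrametric_def by blast
lemma um_pos: "rat_ultrametric X d \<Longrightarrow> x \<in> X \<Longrightarrow> y \<in> X \<Longrightarrow> x \<noteq> y \<Longrightarrow> 0 < d x y"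
  unfolding rat_ultrametric_def by (metis order_le_less)
lemma um_zero: "rat_ultrametric X d \<Longrightarrow> x \<in> X \<Longrightarrow> d x x = 0"
  unfolding rat_ultrametric_def by blast
lemma um_eq0: "rat_ultrametric X d \<Longrightarrow> x \<in> X \<Longrightarrow> y \<in> X \<Longrightarrow> d x y = 0 \<Longrightarrow> x = y"
  unfolding rat_ultrametric_def by blast

definition pinv :: "'a set \<Rightarrow> ('a\<Rightarrow>'a\<Rightarrow>rat) \<Rightarrow> 'b set \<Rightarrow> ('b\<Rightarrow>'b\<Rightarrow>rat) \<Rightarrow> 'a set \<times> ('a \<Rightarrow> 'b) \<Rightarrow> bool" where
 "pinv X dX Y dY s \<longleftrightarrow> finite (fst s) \<and> fst s \<subseteq> X \<and> snd s ` fst s \<subseteq> Y \<and>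
     (\<forall>x\<in>fst s. \<forall>y\<in>fst s. dY (snd s x) (snd s y) = dX x y)"

definition pext :: "'a set \<times> ('a \<Rightarrow> 'b) \<Rightarrow> 'a set \<times> ('a \<Rightarrow> 'b) \<Rightarrow> bool" where
 "pext s s' \<longleftrightarrow> fst s \<subseteq> fst s' \<and> (\<forall>x\<in>fst s. snd s' x = snd s x)"

lemma pext_refl: "pext s s" unfolding pext_def by auto
lemma pext_trans: "pext s1 s2 \<Longrightarrow> pext s2 s3 \<Longrightarrow> pext s1 s3" unfolding pext_def by auto

lemma forth_step:
  assumes umX: "rat_ultrametric X dX" and umY: "rat_ultrametric Y dY" and epY: "EPs Y dY"
    and P: "pinv X dX Y dY s" and x: "x \<in> X"
  shows "\<exists>s'. pinv X dX Y dY s' \<and> pext s s' \<and> x \<in> fst s'"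
proof (cases "x \<in> fst s")
  case True then show ?thesis using P pext_refl by blast
next
  case False
  obtain D h where s: "s = (D, h)" by (cases s)
  have fin: "finite D" "D \<subseteq> X" "h ` D \<subseteq> Y" "\<forall>a\<in>D. \<forall>b\<in>D. dY (h a) (h b) = dX a b"
    using P s unfolding pinv_def by auto
  have xD: "x \<notin> D" using False s by simp
  have "\<exists>y\<in>Y. \<forall>d\<in>D. dY y (h d) = dX x d"
  proof (rule EPi[OF epY umY fin(1) fin(3)])
    show "\<forall>i\<in>D. 0 < dX x i" using um_pos[OF umX] x fin(2) xD by blast
    show "\<forall>i\<in>D. \<forall>j\<in>D. dY (h i) (h j) \<le> max (dX x i) (dX x j) \<and> dX x i \<le> max (dY (h i) (h j)) (dX x j)"
    proof (intro ballI)
      fix i j assume ij: "i \<in> D" "j \<in> D"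
      then have ijX: "i \<in> X" "j \<in> X" using fin(2) by auto
      have 1: "dX i j \<le> max (dX i x) (dX x j)" using um_tri[OF umX ijX(1) x ijX(2)] .
      have 2: "dX x i \<le> max (dX x j) (dX j i)" using um_tri[OF umX x ijX(2) ijX(1)] .
      have s1: "dX i x = dX x i" "dX j i = dX i j" using um_sym[OF umX] ijX x by auto
      show "dY (h i) (h j) \<le> max (dX x i) (dX x j) \<and> dX x i \<le> max (dY (h i) (h j)) (dX x j)"
        using 1 2 s1 fin(4) ij by (auto simp: max.commute)
    qed
  qed
  then obtain y where y: "y \<in> Y" "\<forall>d\<in>D. dY y (h d) = dX x d" by blast
  define s' where "s' = (insert x D, h(x := y))"
  have "pinv X dX Y dY s'"
    unfolding pinv_def s'_def fst_conv snd_conv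
  proof (intro conjI ballI)
    show "finite (insert x D)" using fin by simp
    show "insert x D \<subseteq> X" using fin x by simp
    show "(h(x := y)) ` insert x D \<subseteq> Y" using fin y xD by auto
  next
    fix a b assume ab: "a \<in> insert x D" "b \<in> insert x D"
    have abX: "a \<in> X" "b \<in> X" using ab fin x by auto
    show "dY ((h(x := y)) a) ((h(x := y)) b) = dX a b"
    proof (cases "a = x"; cases "b = x")
      assume "a = x" "b = x" then show ?thesis using um_zero[OF umY y(1)] um_zero[OF umX x] by simp
    next
      assume "a = x" "b \<noteq> x" then show ?thesis using y ab by auto
    next
      assume *: "a \<noteq> x" "b = x"
      then have "a \<in> D" using ab by auto
      then have "dY y (h a) = dX x a" using y by auto
      moreover have "dY (h a) y = dY y (h a)" using um_sym[OF umY] y(1) fin(3) \<open>a \<in> D\<close> by blast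
      moreover have "dX a x = dX x a" using um_sym[OF umX] x abX by blast
      ultimately show ?thesis using * by simp
    next
      assume "a \<noteq> x" "b \<noteq> x" then show ?thesis using fin(4) ab by auto
    qed
  qed
  moreover have "pext s s'" unfolding pext_def s s'_def using xD by auto
  moreover have "x \<in> fst s'" unfolding s'_def by simp
  ultimately show ?thesis by blast
qed

lemma back_step:
  assumes umX: "rat_ultrametric X dX" and umY: "rat_ultrametric Y dY" and epX: "EPs X dX"
    and P: "pinv X dX Y dY s" and y: "y \<in> Y"
  shows "\<exists>s'. pinv X dX Y dY s' \<and> pext s s' \<and> y \<in> snd s' ` fst s'"
proof (cases "y \<in> snd s ` fst s")
  case True then show ?thesis using P pext_refl by blast
next
  case False
  obtain D h where s: "s = (D, h)" by (cases s)
  have fin: "finite D" "D \<subseteq> X" "h ` D \<subseteq> Y" "\<forall>a\<in>D. \<forall>b\<in>D. dY (h a) (h b) = dX a b"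
    using P s unfolding pinv_def by auto
  have yD: "y \<notin> h ` D" using False s by simp
  have "\<exists>x\<in>X. \<forall>d\<in>D. dX x (id d) = dY y (h d)"
  proof (rule EPi[OF epX umX fin(1)])
    show "id ` D \<subseteq> X" using fin by simp
    show "\<forall>i\<in>D. 0 < dY y (h i)" using um_pos[OF umY] y fin(3) yD by blast
    show "\<forall>i\<in>D. \<forall>j\<in>D. dX (id i) (id j) \<le> max (dY y (h i)) (dY y (h j)) \<and> dY y (h i) \<le> max (dX (id i) (id j)) (dY y (h j))"
    proof (intro ballI)
      fix i j assume ij: "i \<in> D" "j \<in> D"
      then have ijY: "h i \<in> Y" "h j \<in> Y" using fin(3) by auto
      have 1: "dY (h i) (h j) \<le> max (dY (h i) y) (dY y (h j))" using um_tri[OF umY ijY(1) y ijY(2)] .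
      have 2: "dY y (h i) \<le> max (dY y (h j)) (dY (h j) (h i))" using um_tri[OF umY y ijY(2) ijY(1)] .
      have s1: "dY (h i) y = dY y (h i)" "dY (h j) (h i) = dY (h i) (h j)" using um_sym[OF umY] ijY y by auto
      show "dX (id i) (id j) \<le> max (dY y (h i)) (dY y (h j)) \<and> dY y (h i) \<le> max (dX (id i) (id j)) (dY y (h j))"
        using 1 2 s1 fin(4) ij by (auto simp: max.commute)
    qed
  qed
  then obtain x where x: "x \<in> X" "\<forall>d\<in>D. dX x d = dY y (h d)" by auto
  have xD: "x \<notin> D"
  proof
    assume "x \<in> D"
    then have "dX x x = dY y (h x)" using x by auto
    moreover have "dX x x = 0" using um_zero[OF umX x(1)] .
    moreover have "0 < dY y (h x)" using um_pos[OF umY] y fin(3) yD \<open>x \<in> D\<close> by blast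
    ultimately show False by simp
  qed
  define s' where "s' = (insert x D, h(x := y))"
  have "pinv X dX Y dY s'"
    unfolding pinv_def s'_def fst_conv snd_conv
  proof (intro conjI ballI)
    show "finite (insert x D)" using fin by simp
    show "insert x D \<subseteq> X" using fin x by simp
    show "(h(x := y)) ` insert x D \<subseteq> Y" using fin y xD by auto
  next
    fix a b assume ab: "a \<in> insert x D" "b \<in> insert x D"
    have abX: "a \<in> X" "b \<in> X" using ab fin x by auto
    show "dY ((h(x := y)) a) ((h(x := y)) b) = dX a b"
    proof (cases "a = x"; cases "b = x")
      assume "a = x" "b = x" then show ?thesis using um_zero[OF umY y] um_zero[OF umX x(1)] by simp
    next
      assume "a = x" "b \<noteq> x" then show ?thesis using x ab by auto
    next
      assume *: "a \<noteq> x" "b = x"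
      then have "a \<in> D" using ab by auto
      then have "dX x a = dY y (h a)" using x by auto
      moreover have "dY (h a) y = dY y (h a)" using um_sym[OF umY] y fin(3) \<open>a \<in> D\<close> by blast
      moreover have "dX a x = dX x a" using um_sym[OF umX] x(1) abX by blast
      ultimately show ?thesis using * by simp
    next
      assume "a \<noteq> x" "b \<noteq> x" then show ?thesis using fin(4) ab by auto
    qed
  qed
  moreover have "pext s s'" unfolding pext_def s s'_def using xD by auto
  moreover have "y \<in> snd s' ` fst s'" unfolding s'_def by simp
  ultimately show ?thesis by blast
qed


fun bfseq :: "'a set \<Rightarrow> ('a\<Rightarrow>'a\<Rightarrow>rat) \<Rightarrow> 'b set \<Rightarrow> ('b\<Rightarrow>'b\<Rightarrow>rat) \<Rightarrow> 'a set \<times> ('a\<Rightarrow>'b) \<Rightarrow> nat \<Rightarrow> 'a set \<times> ('a\<Rightarrow>'b)" where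
  "bfseq X dX Y dY s0 0 = s0"
| "bfseq X dX Y dY s0 (Suc n) =
     (SOME s'. pinv X dX Y dY s' \<and>
        pext (SOME s1. pinv X dX Y dY s1 \<and> pext (bfseq X dX Y dY s0 n) s1 \<and> from_nat_into X n \<in> fst s1) s' \<and>
        from_nat_into Y n \<in> snd s' ` fst s')"

lemma backforth:
  assumes umX: "rat_ultrametric X dX" and umY: "rat_ultrametric Y dY"
    and epX: "EPs X dX" and epY: "EPs Y dY" and cX: "countable X" and cY: "countable Y"
    and P0: "pinv X dX Y dY (A, f0)"
  shows "\<exists>g. bij_betw g X Y \<and> (\<forall>x\<in>X. \<forall>y\<in>X. dY (g x) (g y) = dX x y) \<and> (\<forall>x\<in>A. g x = f0 x)"
proof -
  have neX: "X \<noteq> {}" using EPsD[OF epX, of "{}"] by auto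
  have neY: "Y \<noteq> {}" using EPsD[OF epY, of "{}"] by auto
  define st where "st = bfseq X dX Y dY (A, f0)"
  have step: "pinv X dX Y dY (st (Suc n)) \<and> pext (st n) (st (Suc n)) \<and>
      from_nat_into X n \<in> fst (st (Suc n)) \<and> from_nat_into Y n \<in> snd (st (Suc n)) ` fst (st (Suc n))"
    if Pn: "pinv X dX Y dY (st n)" for n
  proof -
    define s1 where "s1 = (SOME s1. pinv X dX Y dY s1 \<and> pext (st n) s1 \<and> from_nat_into X n \<in> fst s1)"
    have ex1: "\<exists>s1. pinv X dX Y dY s1 \<and> pext (st n) s1 \<and> from_nat_into X n \<in> fst s1"
      by (rule forth_step[OF umX umY epY Pn from_nat_into[OF neX]])
    have s1: "pinv X dX Y dY s1 \<and> pext (st n) s1 \<and> from_nat_into X n \<in> fst s1"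
      unfolding s1_def by (rule someI_ex[OF ex1])
    have ex2: "\<exists>s'. pinv X dX Y dY s' \<and> pext s1 s' \<and> from_nat_into Y n \<in> snd s' ` fst s'"
      by (rule back_step[OF umX umY epX _ from_nat_into[OF neY]]) (use s1 in blast)
    have eq: "st (Suc n) = (SOME s'. pinv X dX Y dY s' \<and> pext s1 s' \<and> from_nat_into Y n \<in> snd s' ` fst s')"
      unfolding st_def s1_def by simp
    have s2: "pinv X dX Y dY (st (Suc n)) \<and> pext s1 (st (Suc n)) \<and> from_nat_into Y n \<in> snd (st (Suc n)) ` fst (st (Suc n))"
      unfolding eq by (rule someI_ex[OF ex2])
    have a: "pext (st n) (st (Suc n))" using pext_trans s1 s2 by blast
    have b: "from_nat_into X n \<in> fst (st (Suc n))" using s1 s2 unfolding pext_def by blast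
    show ?thesis using a b s2 by blast
  qed
  have P: "pinv X dX Y dY (st n)" for n
    by (induction n) (use P0 step in \<open>auto simp: st_def\<close>)
  have mono: "pext (st m) (st n)" if "m \<le> n" for m n
    using that
  proof (induction n)
    case 0 then show ?case using pext_refl by simp
  next
    case (Suc n)
    show ?case
    proof (cases "m = Suc n")
      case True then show ?thesis using pext_refl by simp
    next
      case False
      then have "m \<le> n" using Suc.prems by simp
      then show ?thesis using pext_trans[OF Suc.IH] step[OF P[of n]] by blast
    qed
  qed
  define g where "g x = snd (st (SOME n. x \<in> fst (st n))) x" for x
  have gx: "g x = snd (st n) x" if xn: "x \<in> fst (st n)" for x n
  proof -
    define m where "m = (SOME n. x \<in> fst (st n))"
    have xm: "x \<in> fst (st m)" unfolding m_def using xn by (rule someI)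
    have "snd (st n) x = snd (st m) x"
    proof (cases "m \<le> n")
      case True then show ?thesis using mono xm unfolding pext_def by blast
    next
      case False then show ?thesis using mono[of n m] xn unfolding pext_def by auto
    qed
    then show ?thesis unfolding g_def m_def[symmetric] by simp
  qed
  have inX: "\<exists>n. x \<in> fst (st n)" if xX: "x \<in> X" for x
  proof -
    obtain n where "from_nat_into X n = x" using from_nat_into_surj[OF cX xX] by blast
    then show ?thesis using step[OF P[of n]] by blast
  qed
  have stX: "fst (st n) \<subseteq> X" for n using P[of n] unfolding pinv_def by auto
  have both: "\<exists>n. x \<in> fst (st n) \<and> y \<in> fst (st n)" if xyX: "x \<in> X" "y \<in> X" for x y
  proof -
    obtain n1 n2 where "x \<in> fst (st n1)" "y \<in> fst (st n2)" using inX xyX by blast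
    then show ?thesis using mono[of n1 "max n1 n2"] mono[of n2 "max n1 n2"] unfolding pext_def
      by (meson max.cobounded1 max.cobounded2 subsetD)
  qed
  have iso: "\<forall>x\<in>X. \<forall>y\<in>X. dY (g x) (g y) = dX x y"
  proof (intro ballI)
    fix x y assume "x \<in> X" "y \<in> X"
    then obtain n where n: "x \<in> fst (st n)" "y \<in> fst (st n)" using both by blast
    then show "dY (g x) (g y) = dX x y" using P[of n] gx[OF n(1)] gx[OF n(2)] unfolding pinv_def by auto
  qed
  have gY: "g ` X \<subseteq> Y"
  proof
    fix y assume "y \<in> g ` X"
    then obtain x where x: "x \<in> X" "y = g x" by blast
    then obtain n where n: "x \<in> fst (st n)" using inX by blast
    then show "y \<in> Y" using P[of n] gx[OF n] x unfolding pinv_def by auto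
  qed
  have surj: "Y \<subseteq> g ` X"
  proof
    fix y assume y: "y \<in> Y"
    obtain n where "from_nat_into Y n = y" using from_nat_into_surj[OF cY y] by blast
    then have "y \<in> snd (st (Suc n)) ` fst (st (Suc n))" using step[OF P[of n]] by blast
    then obtain x where x: "x \<in> fst (st (Suc n))" "y = snd (st (Suc n)) x" by blast
    have "x \<in> X" using stX x(1) by blast
    then show "y \<in> g ` X" using x(2) gx[OF x(1)] by (metis image_eqI)
  qed
  have inj: "inj_on g X"
  proof (rule inj_onI)
    fix x y assume xy: "x \<in> X" "y \<in> X" "g x = g y"
    have "dX x y = dY (g x) (g y)" using iso xy(1,2) by simp
    also have "\<dots> = dY (g x) (g x)" using xy by simp
    also have "\<dots> = 0" using um_zero[OF umY] gY xy by blast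
    finally show "x = y" using um_eq0[OF umX] xy by blast
  qed
  have agree: "\<forall>x\<in>A. g x = f0 x" using gx[of _ 0] by (simp add: st_def)
  show ?thesis using inj gY surj iso agree unfolding bij_betw_def by blast
qed



definition psi :: "rat \<Rightarrow> rat" where "psi x = (if 0 \<le> x then x + 1 else 1 / (1 - x))"

lemma psi_pos: "0 < psi x"
  unfolding psi_def by auto

lemma psi_mono: "x < y \<Longrightarrow> psi x < psi y"
proof -
  assume xy: "x < y"
  have "x * y \<le> 0" if "x < 0" "0 \<le> y" using that by (simp add: mult_nonpos_nonneg)
  then show ?thesis using xy unfolding psi_def by (auto simp: field_simps)
qed

lemma psi_le_iff: "psi x \<le> psi y \<longleftrightarrow> x \<le> y"
  by (metis linorder_not_less order_le_less psi_mono)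

lemma psi_surj: "0 < y \<Longrightarrow> \<exists>x. psi x = y"
proof -
  assume y: "0 < y"
  show ?thesis
  proof (cases "1 \<le> y")
    case True then show ?thesis by (intro exI[of _ "y - 1"]) (simp add: psi_def)
  next
    case False
    then have "1 - 1 / y < 0" using y by (simp add: field_simps)
    then show ?thesis using y by (intro exI[of _ "1 - 1 / y"]) (simp add: psi_def field_simps)
  qed
qed

definition phi :: "real \<Rightarrow> rat" where
  "phi r = (if r = 0 then 0 else psi (- (THE q. r = exp (- real_of_rat q))))"

lemma phi_exp: "phi (exp (- real_of_rat q)) = psi (- q)"
proof -
  have "(THE q'. exp (- real_of_rat q) = exp (- real_of_rat q')) = q"
    by (rule the_equality) auto
  then show ?thesis unfolding phi_def by simp
qed

lemma phi_0: "phi 0 = 0" unfolding phi_def by simp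

lemma phi_strict: "strict_mono_on distset phi"
proof (rule strict_mono_onI)
  fix r s assume r: "r \<in> distset" and s: "s \<in> distset" and rs: "r < s"
  from s rs obtain q2 where q2: "s = exp (- real_of_rat q2)" unfolding distset_def
    using r unfolding distset_def by auto
  show "phi r < phi s"
  proof (cases "r = 0")
    case True then show ?thesis using q2 phi_exp phi_0 psi_pos by simp
  next
    case False
    then obtain q1 where q1: "r = exp (- real_of_rat q1)" using r unfolding distset_def by auto
    then have "- real_of_rat q1 < - real_of_rat q2" using rs q2 by simp
    then have "- q1 < - q2" by (simp add: of_rat_less)
    then show ?thesis using q1 q2 phi_exp psi_mono by simp
  qed
qed

lemma phi_bij: "bij_betw phi distset {q. 0 \<le> q}"
  unfolding bij_betw_def
proof
  show "inj_on phi distset" using phi_strict by (rule strict_mono_on_imp_inj_on)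
  show "phi ` distset = {q. 0 \<le> q}"
  proof
    show "phi ` distset \<subseteq> {q. 0 \<le> q}"
      unfolding distset_def using phi_exp phi_0 psi_pos by (auto simp: less_imp_le)
  next
    show "{q. 0 \<le> q} \<subseteq> phi ` distset"
    proof
      fix y :: rat assume "y \<in> {q. 0 \<le> q}"
      then have y: "0 \<le> y" by simp
      show "y \<in> phi ` distset"
      proof (cases "y = 0")
        case True then show ?thesis using phi_0 unfolding distset_def by force
      next
        case False
        then obtain x where "psi x = y" using psi_surj y by force
        then have "phi (exp (- real_of_rat (- x))) = y" using phi_exp[of "-x"] by simp
        moreover have "exp (- real_of_rat (- x)) \<in> distset" unfolding distset_def by blast
        ultimately show ?thesis by (metis image_eqI)
      qed
    qed
  qed
qed


lemma hahn_subset_union: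
  assumes "a \<in> hahn" "b \<in> hahn" "hsupp c \<subseteq> hsupp a \<union> hsupp b"
  shows "c \<in> hahn"
  unfolding hahn_def
proof (intro CollectI allI impI)
  fix S assume S: "S \<subseteq> hsupp c" "S \<noteq> {}"
  have wa: "\<And>T. T \<subseteq> hsupp a \<Longrightarrow> T \<noteq> {} \<Longrightarrow> \<exists>m\<in>T. \<forall>x\<in>T. m \<le> x" using assms(1) unfolding hahn_def by blast
  have wb: "\<And>T. T \<subseteq> hsupp b \<Longrightarrow> T \<noteq> {} \<Longrightarrow> \<exists>m\<in>T. \<forall>x\<in>T. m \<le> x" using assms(2) unfolding hahn_def by blast
  show "\<exists>m\<in>S. \<forall>x\<in>S. m \<le> x"
  proof (cases "S \<inter> hsupp a = {}")
    case True
    then have "S \<subseteq> hsupp b" using S assms(3) by blast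
    then show ?thesis using wb S by blast
  next
    case Fa: False
    obtain ma where ma: "ma \<in> S \<inter> hsupp a" "\<forall>x\<in>S \<inter> hsupp a. ma \<le> x" using wa[of "S \<inter> hsupp a"] Fa by blast
    show ?thesis
    proof (cases "S \<inter> hsupp b = {}")
      case True
      then have "S \<subseteq> hsupp a" using S assms(3) by blast
      then show ?thesis using wa S by blast
    next
      case False
      obtain mb where mb: "mb \<in> S \<inter> hsupp b" "\<forall>x\<in>S \<inter> hsupp b. mb \<le> x" using wb[of "S \<inter> hsupp b"] False by blast
      have "\<forall>x\<in>S. min ma mb \<le> x"
      proof
        fix x assume "x \<in> S"
        then have "x \<in> hsupp a \<or> x \<in> hsupp b" using S assms(3) by blast
        then show "min ma mb \<le> x" using ma mb \<open>x \<in> S\<close> by (auto simp: min_le_iff_disj)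
      qed
      moreover have "min ma mb \<in> S" using ma mb by (simp add: min_def)
      ultimately show ?thesis by blast
    qed
  qed
qed

lemma hsupp_hsub: "hsupp (hsub a b) \<subseteq> hsupp a \<union> hsupp b"
  unfolding hsupp_def hsub_def by auto

lemma hahn_hsub: "a \<in> hahn \<Longrightarrow> b \<in> hahn \<Longrightarrow> hsub a b \<in> hahn"
  using hahn_subset_union hsupp_hsub by blast

lemma hsub_eq0: "hsub a b = (\<lambda>_. 0) \<longleftrightarrow> a = b"
  unfolding hsub_def by (auto simp: fun_eq_iff)

lemma hval_eqI: "m \<in> hsupp a \<Longrightarrow> (\<And>x. x < m \<Longrightarrow> a x = 0) \<Longrightarrow> hval a = m"
  unfolding hval_def
  by (rule Least_equality) (auto simp: hsupp_def intro: ccontr[of "_ \<le> _"] dest: not_le_imp_less)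

lemma hval_min:
  assumes "a \<in> hahn" "a \<noteq> (\<lambda>_. 0)"
  shows "hval a \<in> hsupp a" "\<And>x. x \<in> hsupp a \<Longrightarrow> hval a \<le> x"
proof -
  have "hsupp a \<noteq> {}" using assms(2) unfolding hsupp_def by auto
  then obtain m where m: "m \<in> hsupp a" "\<forall>x\<in>hsupp a. m \<le> x" using assms(1) unfolding hahn_def by blast
  have "hval a = m"
    apply (rule hval_eqI[OF m(1)])
    using m(2) unfolding hsupp_def by (meson linorder_not_le mem_Collect_eq)
  then show "hval a \<in> hsupp a" "\<And>x. x \<in> hsupp a \<Longrightarrow> hval a \<le> x" using m by auto
qed

lemma hval_sym: "hval (hsub a b) = hval (hsub b a)"
proof -
  have "hsupp (hsub a b) = hsupp (hsub b a)" unfolding hsupp_def hsub_def by auto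
  then show ?thesis unfolding hval_def by simp
qed

lemma D_eq: "phi (hdist a b) = (if a = b then 0 else psi (- hval (hsub a b)))"
  unfolding hdist_def using phi_exp phi_0 by simp

lemma hrat_hahn: "a \<in> hrat \<Longrightarrow> a \<in> hahn" unfolding hrat_def by simp

lemma hval_tri:
  assumes "a \<in> hahn" "b \<in> hahn" "c \<in> hahn" "a \<noteq> b" "b \<noteq> c" "a \<noteq> c"
  shows "min (hval (hsub a b)) (hval (hsub b c)) \<le> hval (hsub a c)"
proof -
  let ?x = "hval (hsub a c)"
  have ne: "hsub a c \<noteq> (\<lambda>_. 0)" "hsub a b \<noteq> (\<lambda>_. 0)" "hsub b c \<noteq> (\<lambda>_. 0)"
    using assms hsub_eq0 by metis+
  have "?x \<in> hsupp (hsub a c)" using hval_min(1)[OF hahn_hsub[OF assms(1,3)] ne(1)] .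
  then have "?x \<in> hsupp (hsub a b) \<or> ?x \<in> hsupp (hsub b c)" unfolding hsupp_def hsub_def by auto
  then show ?thesis
    using hval_min(2)[OF hahn_hsub[OF assms(1,2)] ne(2)] hval_min(2)[OF hahn_hsub[OF assms(2,3)] ne(3)]
    by (auto simp: min_le_iff_disj)
qed

lemma hrat_um: "rat_ultrametric (hrat :: (rat \<Rightarrow> 'k::field) set) (\<lambda>a b. phi (hdist a b))"
  unfolding rat_ultrametric_def
proof (rule conjI; intro ballI)
  fix x y assume "x \<in> (hrat :: (rat \<Rightarrow> 'k) set)" "y \<in> (hrat :: (rat \<Rightarrow> 'k) set)"
  show "0 \<le> phi (hdist x y) \<and> (phi (hdist x y) = 0) = (x = y) \<and> phi (hdist x y) = phi (hdist y x)"
    unfolding D_eq using psi_pos[of "- hval (hsub x y)"] hval_sym[of x y] by (auto simp: less_imp_le)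
next
  fix x y z assume xyz: "x \<in> (hrat :: (rat \<Rightarrow> 'k) set)" "y \<in> (hrat :: (rat \<Rightarrow> 'k) set)" "z \<in> (hrat :: (rat \<Rightarrow> 'k) set)"
  show "phi (hdist x z) \<le> max (phi (hdist x y)) (phi (hdist y z))"
  proof (cases "x = z")
    case True then show ?thesis unfolding D_eq using psi_pos by (auto simp: le_max_iff_disj less_imp_le)
  next
    case xz: False
    show ?thesis
    proof (cases "x = y \<or> y = z")
      case True then show ?thesis unfolding D_eq using xz by auto
    next
      case False
      have "min (hval (hsub x y)) (hval (hsub y z)) \<le> hval (hsub x z)"
        using hval_tri[OF hrat_hahn[OF xyz(1)] hrat_hahn[OF xyz(2)] hrat_hahn[OF xyz(3)]] False xz by blast
      then show ?thesis unfolding D_eq using False xz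
        by (auto simp: psi_le_iff le_max_iff_disj min_le_iff_disj)
    qed
  qed
qed


lemma hmul_poly:
  assumes fq: "finite (hsupp q)"
  shows "hmul a q x = (\<Sum>s\<in>hsupp q. a (x - s) * q s)"
proof -
  let ?S = "{s \<in> hsupp q. x - s \<in> hsupp a}"
  have T: "{(r, s). r \<in> hsupp a \<and> s \<in> hsupp q \<and> r + s = x} = (\<lambda>s. (x - s, s)) ` ?S"
  proof (rule set_eqI)
    fix rs :: "rat \<times> rat"
    obtain r s where rs: "rs = (r, s)" by (cases rs)
    show "rs \<in> {(r, s). r \<in> hsupp a \<and> s \<in> hsupp q \<and> r + s = x} \<longleftrightarrow> rs \<in> (\<lambda>s. (x - s, s)) ` ?S"
      unfolding rs by (auto simp: image_iff algebra_simps)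
  qed
  have inj: "inj_on (\<lambda>s. (x - s, s)) ?S" by (auto simp: inj_on_def)
  have "hmul a q x = (\<Sum>(r, s)\<in>(\<lambda>s. (x - s, s)) ` ?S. a r * q s)" unfolding hmul_def T by simp
  also have "\<dots> = (\<Sum>s\<in>?S. a (x - s) * q s)" by (simp add: sum.reindex[OF inj])
  also have "\<dots> = (\<Sum>s\<in>hsupp q. a (x - s) * q s)"
    by (rule sum.mono_neutral_left[OF fq]) (auto simp: hsupp_def)
  finally show ?thesis .
qed

lemma zero_hrat: "(\<lambda>_. 0) \<in> hrat"
proof -
  have h: "(\<lambda>_. 0) \<in> hahn" unfolding hahn_def hsupp_def by auto
  define q :: "rat \<Rightarrow> 'a" where "q = (\<lambda>x. if x = 0 then 1 else 0)"
  have "hsupp q = {0}" unfolding q_def hsupp_def by auto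
  then have qp: "q \<in> hpoly" "q \<noteq> (\<lambda>_. 0)" unfolding hpoly_def q_def by (auto simp: fun_eq_iff)
  have "hmul (\<lambda>_. 0) q = (\<lambda>_. 0)" unfolding hmul_def hsupp_def by simp
  moreover have "(\<lambda>_. 0) \<in> (hpoly :: (rat \<Rightarrow> 'a) set)" unfolding hpoly_def hsupp_def by simp
  ultimately show ?thesis unfolding hrat_def using h qp by blast
qed

lemma hmul_cancel:
  assumes a: "a \<in> hahn" and b: "b \<in> hahn" and fq: "finite (hsupp q)" and q0: "q \<noteq> (\<lambda>_. 0)"
    and eq: "hmul a q = hmul b q"
  shows "a = b"
proof (rule ccontr)
  assume ab: "a \<noteq> b"
  define d where "d = hsub a b"
  have dh: "d \<in> hahn" using hahn_hsub a b d_def by blast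
  have d0: "d \<noteq> (\<lambda>_. 0)" using ab hsub_eq0 d_def by metis
  have lin: "hmul a q x - hmul b q x = (\<Sum>s\<in>hsupp q. d (x - s) * q s)" for x
    unfolding hmul_poly[OF fq] d_def hsub_def by (simp add: sum_subtractf[symmetric] left_diff_distrib)
  have ne: "hsupp q \<noteq> {}" using q0 unfolding hsupp_def by auto
  define vq where "vq = Min (hsupp q)"
  have vq: "vq \<in> hsupp q" "\<forall>s\<in>hsupp q. vq \<le> s" using fq ne unfolding vq_def by auto
  define vd where "vd = hval d"
  have vd: "vd \<in> hsupp d" "\<forall>s\<in>hsupp d. vd \<le> s" using hval_min[OF dh d0] unfolding vd_def by auto
  have "(\<Sum>s\<in>hsupp q. d (vd + vq - s) * q s) = d (vd + vq - vq) * q vq + (\<Sum>s\<in>hsupp q - {vq}. d (vd + vq - s) * q s)"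
    using sum.remove[OF fq vq(1)] .
  also have "(\<Sum>s\<in>hsupp q - {vq}. d (vd + vq - s) * q s) = 0"
  proof (rule sum.neutral, rule ballI)
    fix s assume s: "s \<in> hsupp q - {vq}"
    then have "vq < s" using vq by force
    then have "vd + vq - s < vd" by simp
    then have "vd + vq - s \<notin> hsupp d" using vd by force
    then show "d (vd + vq - s) * q s = 0" unfolding hsupp_def by simp
  qed
  finally have "(\<Sum>s\<in>hsupp q. d (vd + vq - s) * q s) = d vd * q vq" by simp
  moreover have "d vd * q vq \<noteq> 0" using vd(1) vq(1) unfolding hsupp_def by simp
  ultimately have "hmul a q (vd+vq) - hmul b q (vd+vq) \<noteq> 0" using lin by simp
  then show False using eq by simp
qed

lemma countable_hpoly: "countable (hpoly :: (rat \<Rightarrow> 'k::{field,countable}) set)"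
proof -
  define G where "G a = (\<lambda>q. (q, a q)) ` hsupp a" for a :: "rat \<Rightarrow> 'k"
  have mem: "(x, v) \<in> G a \<longleftrightarrow> v = a x \<and> a x \<noteq> 0" for x v a
    unfolding G_def hsupp_def by auto
  have inj: "inj_on G hpoly"
  proof (rule inj_onI)
    fix a b assume ab: "a \<in> hpoly" "b \<in> hpoly" "G a = G b"
    show "a = b"
    proof
      fix x
      show "a x = b x"
      proof (cases "a x = 0")
        case True
        then have "(x, b x) \<notin> G a" using mem by simp
        then have "(x, b x) \<notin> G b" using ab by simp
        then show ?thesis using True mem by simp
      next
        case False
        then have "(x, a x) \<in> G a" using mem by simp
        then have "(x, a x) \<in> G b" using ab by simp
        then show ?thesis using mem by simp
      qed
    qed
  qed
  have "G ` hpoly \<subseteq> {A. finite A \<and> A \<subseteq> (UNIV :: (rat \<times> 'k) set)}"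
    unfolding G_def hpoly_def by auto
  moreover have "countable {A. finite A \<and> A \<subseteq> (UNIV :: (rat \<times> 'k) set)}"
    by (rule countable_Collect_finite_subset) simp
  ultimately have "countable (G ` hpoly)" by (rule countable_subset)
  then show ?thesis using inj by (rule countable_image_inj_on)
qed

lemma countable_hrat: "countable (hrat :: (rat \<Rightarrow> 'k::{field,countable}) set)"
proof -
  define P where "P a pq = (fst pq \<in> hpoly \<and> snd pq \<in> hpoly \<and> snd pq \<noteq> (\<lambda>_. 0) \<and> hmul a (snd pq) = fst pq)"
    for a :: "rat \<Rightarrow> 'k" and pq
  define G where "G a = (SOME pq. P a pq)" for a
  have G: "P a (G a)" if "a \<in> hrat" for a
  proof -
    have "\<exists>pq. P a pq" using that unfolding hrat_def P_def by force
    then show ?thesis unfolding G_def by (rule someI_ex)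
  qed
  have inj: "inj_on G hrat"
  proof (rule inj_onI)
    fix a b assume ab: "a \<in> hrat" "b \<in> hrat" "G a = G b"
    have "hmul a (snd (G a)) = hmul b (snd (G a))" using G[OF ab(1)] G[OF ab(2)] ab(3) unfolding P_def by simp
    then show "a = b"
      using hmul_cancel[OF hrat_hahn[OF ab(1)] hrat_hahn[OF ab(2)]] G[OF ab(1)] unfolding P_def hpoly_def by blast
  qed
  have "G ` hrat \<subseteq> hpoly \<times> hpoly"
  proof
    fix pq assume "pq \<in> G ` hrat"
    then obtain a where a: "a \<in> hrat" "pq = G a" by blast
    then have "fst pq \<in> hpoly" "snd pq \<in> hpoly" using G[OF a(1)] unfolding P_def by auto
    then show "pq \<in> hpoly \<times> hpoly" by (cases pq) auto
  qed
  moreover have "countable ((hpoly :: (rat \<Rightarrow> 'k) set) \<times> (hpoly :: (rat \<Rightarrow> 'k) set))" by (rule countable_SIGMA) (rule countable_hpoly)+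
  ultimately have "countable (G ` hrat)" by (rule countable_subset)
  then show ?thesis using inj by (rule countable_image_inj_on)
qed


lemma hrat_shift:
  assumes a0: "a0 \<in> hrat"
  shows "(\<lambda>x. a0 x + (if x = \<gamma> then c else 0)) \<in> hrat"
proof -
  obtain p q where pq: "p \<in> hpoly" "q \<in> hpoly" "q \<noteq> (\<lambda>_. 0)" "hmul a0 q = p"
    using a0 unfolding hrat_def by blast
  have ah: "a0 \<in> hahn" using a0 unfolding hrat_def by blast
  define z where "z = (\<lambda>x. a0 x + (if x = \<gamma> then c else 0))"
  define mo where "mo = (\<lambda>x. if x = \<gamma> then c else 0)"
  have mh: "mo \<in> hahn"
    unfolding hahn_def
  proof (intro CollectI allI impI)
    fix S assume S: "S \<subseteq> hsupp mo" "S \<noteq> {}"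
    have "hsupp mo \<subseteq> {\<gamma>}" unfolding mo_def hsupp_def by auto
    then have "S = {\<gamma>}" using S by blast
    then show "\<exists>m\<in>S. \<forall>x\<in>S. m \<le> x" by simp
  qed
  have "hsupp z \<subseteq> hsupp a0 \<union> hsupp mo" unfolding z_def mo_def hsupp_def by auto
  then have zh: "z \<in> hahn" using hahn_subset_union[OF ah mh] by blast
  have fq: "finite (hsupp q)" using pq(2) unfolding hpoly_def by simp
  define p' where "p' = (\<lambda>x. p x + c * q (x - \<gamma>))"
  have "hmul z q x = p' x" for x
  proof -
    have "hmul z q x = (\<Sum>s\<in>hsupp q. a0 (x - s) * q s + (if s = x - \<gamma> then c * q s else 0))"
      unfolding hmul_poly[OF fq] z_def by (rule sum.cong) (auto simp: distrib_right)
    also have "\<dots> = (\<Sum>s\<in>hsupp q. a0 (x - s) * q s) + (\<Sum>s\<in>hsupp q. (if s = x - \<gamma> then c * q s else 0))"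
      by (rule sum.distrib)
    also have "(\<Sum>s\<in>hsupp q. (if s = x - \<gamma> then c * q s else 0)) = c * q (x - \<gamma>)"
      using fq by (simp add: hsupp_def)
    also have "(\<Sum>s\<in>hsupp q. a0 (x - s) * q s) = p x" using pq(4) hmul_poly[OF fq, of a0 x] by simp
    finally show ?thesis unfolding p'_def .
  qed
  then have hm: "hmul z q = p'" by auto
  have "hsupp p' \<subseteq> hsupp p \<union> (\<lambda>s. s + \<gamma>) ` hsupp q"
  proof
    fix x assume "x \<in> hsupp p'"
    then have "p x \<noteq> 0 \<or> q (x - \<gamma>) \<noteq> 0" unfolding hsupp_def p'_def by auto
    moreover have "x = (x - \<gamma>) + \<gamma>" by simp
    ultimately show "x \<in> hsupp p \<union> (\<lambda>s. s + \<gamma>) ` hsupp q" unfolding hsupp_def by blast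
  qed
  moreover have "finite (hsupp p \<union> (\<lambda>s. s + \<gamma>) ` hsupp q)" using pq(1) fq unfolding hpoly_def by simp
  ultimately have "p' \<in> hpoly" unfolding hpoly_def by (simp add: finite_subset)
  then show ?thesis unfolding hrat_def z_def[symmetric] using zh hm pq(2,3) by blast
qed

lemma hrat_C:
  assumes inf: "infinite (UNIV :: 'k::field set)"
  and fin: "finite A" and AX: "A \<subseteq> (hrat :: (rat \<Rightarrow> 'k) set)" and a0: "a0 \<in> hrat" and m: "0 < m"
  shows "\<exists>z\<in>hrat. phi (hdist z a0) = m \<and> (\<forall>a\<in>A. phi (hdist a a0) \<le> m \<longrightarrow> phi (hdist z a) = m)"
proof -
  obtain g where g: "psi g = m" using psi_surj m by blast
  define \<gamma> where "\<gamma> = - g"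
  have pg: "psi (-\<gamma>) = m" using g \<gamma>_def by simp
  have "finite ((\<lambda>a. a \<gamma> - a0 \<gamma>) ` insert a0 A)" using fin by simp
  then obtain c :: 'k where c: "c \<notin> (\<lambda>a. a \<gamma> - a0 \<gamma>) ` insert a0 A" using ex_new_if_finite[OF inf] by blast
  define z where "z = (\<lambda>x. a0 x + (if x = \<gamma> then c else 0))"
  have zr: "z \<in> hrat" using hrat_shift[OF a0] unfolding z_def .
  have key: "z \<noteq> a \<and> hval (hsub z a) = \<gamma>" if a: "a \<in> insert a0 A" and close: "a = a0 \<or> \<gamma> \<le> hval (hsub a a0)" for a
  proof -
    have cg: "c \<noteq> a \<gamma> - a0 \<gamma>" using c a by blast
    have low: "hsub z a x = 0" if x: "x < \<gamma>" for x
    proof (cases "a = a0")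
      case True then show ?thesis using x unfolding z_def hsub_def by simp
    next
      case False
      have ah: "a \<in> hahn" using a AX a0 hrat_hahn by blast
      have a0h: "a0 \<in> hahn" using a0 hrat_hahn by blast
      have ne: "hsub a a0 \<noteq> (\<lambda>_. 0)" using False hsub_eq0 by metis
      have "\<gamma> \<le> hval (hsub a a0)" using close False by simp
      then have "x \<notin> hsupp (hsub a a0)" using hval_min(2)[OF hahn_hsub[OF ah a0h] ne] x by force
      then have "a x = a0 x" unfolding hsupp_def hsub_def by simp
      then show ?thesis using x unfolding z_def hsub_def by simp
    qed
    have at: "hsub z a \<gamma> \<noteq> 0" unfolding z_def hsub_def using cg by (simp add: algebra_simps)
    have "hval (hsub z a) = \<gamma>" by (rule hval_eqI) (use at low in \<open>auto simp: hsupp_def\<close>)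
    moreover have "z \<noteq> a" using at unfolding hsub_def by auto
    ultimately show ?thesis by simp
  qed
  have "phi (hdist z a0) = m" using key[of a0] pg unfolding D_eq by simp
  moreover have "\<forall>a\<in>A. phi (hdist a a0) \<le> m \<longrightarrow> phi (hdist z a) = m"
  proof (intro ballI impI)
    fix a assume a: "a \<in> A" "phi (hdist a a0) \<le> m"
    have "a = a0 \<or> \<gamma> \<le> hval (hsub a a0)" using a(2) pg unfolding D_eq by (auto simp: psi_le_iff split: if_splits)
    then show "phi (hdist z a) = m" using key[of a] a(1) pg unfolding D_eq by auto
  qed
  ultimately show ?thesis using zr by blast
qed



theorem corollary3p33:
  assumes "infinite (UNIV :: ('k::{field,countable}) set)"
  shows "\<exists>\<phi> :: real \<Rightarrow> rat.
           bij_betw \<phi> distset {q. 0 \<le> q} \<and> strict_mono_on distset \<phi> \<and>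
           rat_urysohn (hrat :: (rat \<Rightarrow> 'k) set) (\<lambda>a b. \<phi> (hdist a b)) \<and>
           (\<forall>(U :: nat set) \<delta>. rat_urysohn U \<delta> \<longrightarrow>
              (\<exists>f. bij_betw f (hrat :: (rat \<Rightarrow> 'k) set) U \<and>
                   (\<forall>a\<in>hrat. \<forall>b\<in>hrat. \<delta> (f a) (f b) = \<phi> (hdist a b))))"
proof -
  let ?X = "hrat :: (rat \<Rightarrow> 'k) set"
  let ?d = "\<lambda>a b. phi (hdist a b)"
  have um: "rat_ultrametric ?X ?d" by (rule hrat_um)
  have ep: "EPs ?X ?d"
    apply (rule C_imp_EPs[OF um])
    using zero_hrat apply blast
    apply (rule hrat_C[OF assms])
    by assumption+
  have cnt: "countable ?X" by (rule countable_hrat)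
  have univ: "\<forall>(F::nat set) \<rho>. finite F \<longrightarrow> rat_ultrametric F \<rho> \<longrightarrow> (\<exists>f. isom_embedding F \<rho> ?X ?d f)"
    using EPs_universal[OF ep um] by blast
  have hom: "\<forall>A f. finite A \<longrightarrow> A \<subseteq> ?X \<longrightarrow> isom_embedding A ?d ?X ?d f \<longrightarrow>
        (\<exists>g. bij_betw g ?X ?X \<and> isom_embedding ?X ?d ?X ?d g \<and> (\<forall>x\<in>A. g x = f x))"
  proof (intro allI impI)
    fix A f assume A: "finite A" "A \<subseteq> ?X" "isom_embedding A ?d ?X ?d f"
    have P0: "pinv ?X ?d ?X ?d (A, f)" using A unfolding pinv_def isom_embedding_def by auto
    obtain g where g: "bij_betw g ?X ?X" "\<forall>x\<in>?X. \<forall>y\<in>?X. ?d (g x) (g y) = ?d x y" "\<forall>x\<in>A. g x = f x"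
      using backforth[OF um um ep ep cnt cnt P0] by blast
    have "isom_embedding ?X ?d ?X ?d g" unfolding isom_embedding_def using g(1,2) bij_betw_imp_surj_on by blast
    then show "\<exists>g. bij_betw g ?X ?X \<and> isom_embedding ?X ?d ?X ?d g \<and> (\<forall>x\<in>A. g x = f x)" using g by blast
  qed
  have ur: "rat_urysohn ?X ?d" unfolding rat_urysohn_def using cnt um univ hom by blast
  have p4: "\<forall>(U :: nat set) \<delta>. rat_urysohn U \<delta> \<longrightarrow>
              (\<exists>f. bij_betw f ?X U \<and> (\<forall>a\<in>?X. \<forall>b\<in>?X. \<delta> (f a) (f b) = ?d a b))"
  proof (intro allI impI)
    fix U :: "nat set" and \<delta> assume U: "rat_urysohn U \<delta>"
    have epU: "EPs U \<delta>" by (rule urysohn_EPs[OF U])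
    have umU: "rat_ultrametric U \<delta>" using U unfolding rat_urysohn_def by (elim conjE)
    have cU: "countable U" using U unfolding rat_urysohn_def by (elim conjE)
    have P0: "pinv ?X ?d U \<delta> ({}, \<lambda>_. 0)" unfolding pinv_def by simp
    obtain g where g: "bij_betw g ?X U" "\<forall>x\<in>?X. \<forall>y\<in>?X. \<delta> (g x) (g y) = ?d x y"
      using backforth[OF um umU ep epU cnt cU P0] by blast
    then show "\<exists>f. bij_betw f ?X U \<and> (\<forall>a\<in>?X. \<forall>b\<in>?X. \<delta> (f a) (f b) = ?d a b)" by blast
  qed
  show ?thesis
    apply (rule exI[of _ phi])
    using phi_bij phi_strict ur p4 by blast
qed

end
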